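(* Let $n\ge1$, let $p$ be a prime, and let $L(\mathbf{X})=\sum_{i,j=1}^n a_{ij}x_{ij}\in\mathbb{F}_p[\mathbf{X}]$ be a nontrivial (not identically zero) linear form in the $n^2$ variables $\mathbf{X}=(x_{ij})_{i,j=1}^n$. Then \[ S_p(L)=\sum_{\substack{\mathbf{X}\in\mathbb{F}_p^{n\times n}\\ \det\mathbf{X}=0}}\exp\left(2\pi i\,L(\mathbf{X})/p\right)\ll p^{n^2-(n+1)/2}, \] where the implied constant depends only on $n$.
   Context: Here $L(\mathbf{X})\in\mathbb{F}_p$ is identified with an integer in $\{0,\dots,p-1\}$ in the exponential. *)

theory Defs
  imports "HOL-Analysis.Analysis" "HOL-Library.FuncSet" "Jordan_Normal_Form.Determinant"
begin

text \<open>Elements of F_p are represented by integers in {0..<p}; an n x n matrix over F_p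
  is a function X with X i j in {0..<p} for i,j < n (extensional: arbitrary outside).\<close>

definition Fp_matrices :: "nat \<Rightarrow> nat \<Rightarrow> (nat \<Rightarrow> nat \<Rightarrow> int) set" where
  "Fp_matrices n p = {0..<n} \<rightarrow>\<^sub>E ({0..<n} \<rightarrow>\<^sub>E {0..<int p})"

definition det_zero_mod :: "nat \<Rightarrow> nat \<Rightarrow> (nat \<Rightarrow> nat \<Rightarrow> int) \<Rightarrow> bool" where
  "det_zero_mod n p X \<longleftrightarrow> int p dvd det (mat n n (\<lambda>(i,j). X i j))"

definition lin_form :: "nat \<Rightarrow> nat \<Rightarrow> (nat \<Rightarrow> nat \<Rightarrow> int) \<Rightarrow> (nat \<Rightarrow> nat \<Rightarrow> int) \<Rightarrow> int" where
  "lin_form n p a X = (\<Sum>i<n. \<Sum>j<n. a i j * X i j) mod int p"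

definition S_p :: "nat \<Rightarrow> nat \<Rightarrow> (nat \<Rightarrow> nat \<Rightarrow> int) \<Rightarrow> complex" where
  "S_p n p a = (\<Sum>X\<in>{X \<in> Fp_matrices n p. det_zero_mod n p X}.
      exp (2 * of_real pi * \<i> * of_int (lin_form n p a X) / of_nat p))"

end

theory Submission
  imports Defs
begin

definition ee :: "nat \<Rightarrow> int \<Rightarrow> complex" where
  "ee p m = exp (2 * of_real pi * \<i> * of_int m / of_nat p)"

lemma ee_add: "ee p (a + b) = ee p a * ee p b"
  unfolding ee_def by (simp add: exp_add[symmetric] add_divide_distrib algebra_simps)

lemma ee_norm: "norm (ee p m) = 1"
  unfolding ee_def by (simp add: norm_exp_eq_Re)

lemma ee_mult_p: "p > 0 \<Longrightarrow> ee p (int p * q) = 1"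
proof -
  assume "p > 0"
  have "ee p (int p * q) = exp ((2 * of_int q * pi) * \<i>)"
    unfolding ee_def using \<open>p > 0\<close> by (simp add: field_simps)
  also have "\<dots> = 1" by (rule exp_integer_2pi) simp
  finally show ?thesis .
qed

lemma ee_mod: "p > 0 \<Longrightarrow> ee p (m mod int p) = ee p m"
proof -
  assume p: "p > 0"
  have "ee p m = ee p (m mod int p + int p * (m div int p))" by simp
  also have "\<dots> = ee p (m mod int p)" using p by (simp only: ee_add ee_mult_p) simp
  finally show ?thesis by simp
qed

lemma ee_ne1:
  assumes "p > 0" "\<not> int p dvd m"
  shows "ee p m \<noteq> 1"
proof
  assume "ee p m = 1"
  then have "exp (complex_of_real (2 * pi * m / p) * \<i>) = 1"
    unfolding ee_def by (simp add: field_simps)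
  then obtain q :: int where q: "2 * pi * m / p = of_int (2 * q) * pi"
    unfolding exp_eq_1 by auto
  then have "real_of_int m = real p * of_int q" using assms(1) by (simp add: field_simps)
  then have "m = int p * q" by (metis of_int_eq_iff of_int_mult of_int_of_nat_eq)
  then show False using assms(2) by simp
qed

definition RR :: "nat \<Rightarrow> nat \<Rightarrow> (nat \<Rightarrow> int) set" where
  "RR n p = {0..<n} \<rightarrow>\<^sub>E {0..<int p}"

lemma finite_RR[simp]: "finite (RR n p)"
  unfolding RR_def by (simp add: finite_PiE)

lemma sum_mod_shift:
  fixes x v c :: "nat \<Rightarrow> int"
  shows "(\<Sum>j<n. ((x j + v j) mod q) * c j) mod q = ((\<Sum>j<n. x j * c j) + (\<Sum>j<n. v j * c j)) mod q"
proof -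
  have "(\<Sum>j<n. ((x j + v j) mod q) * c j) mod q = (\<Sum>j<n. (((x j + v j) mod q) * c j) mod q) mod q"
    by (simp add: mod_sum_eq)
  also have "\<dots> = (\<Sum>j<n. ((x j + v j) * c j) mod q) mod q"
    by (simp add: mod_mult_left_eq)
  also have "\<dots> = (\<Sum>j<n. (x j + v j) * c j) mod q"
    by (simp add: mod_sum_eq)
  also have "\<dots> = ((\<Sum>j<n. x j * c j) + (\<Sum>j<n. v j * c j)) mod q"
    by (simp add: sum.distrib distrib_right)
  finally show ?thesis .
qed

lemma shift_zero:
  fixes c v a :: "nat \<Rightarrow> int"
  assumes p: "p > 0"
    and vc: "int p dvd (\<Sum>j<n. v j * c j)"
    and av: "\<not> int p dvd (\<Sum>j<n. a j * v j)"
  shows "(\<Sum>x\<in>{x\<in>RR n p. int p dvd (\<Sum>j<n. x j * c j)}. ee p (\<Sum>j<n. a j * x j)) = 0"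
proof -
  define g where "g x = (if int p dvd (\<Sum>j<n. x j * c j) then ee p (\<Sum>j<n. a j * x j) else 0)" for x
  define \<sigma> where "\<sigma> x = restrict (\<lambda>j. (x j + v j) mod int p) {0..<n}" for x :: "nat \<Rightarrow> int"
  define \<tau> where "\<tau> x = restrict (\<lambda>j. (x j - v j) mod int p) {0..<n}" for x :: "nat \<Rightarrow> int"
  have T: "(\<Sum>x\<in>{x\<in>RR n p. int p dvd (\<Sum>j<n. x j * c j)}. ee p (\<Sum>j<n. a j * x j)) = sum g (RR n p)"
    unfolding g_def by (simp add: sum.inter_filter[symmetric])
  have bij: "bij_betw \<sigma> (RR n p) (RR n p)"
  proof (rule bij_betwI[where g = \<tau>])
    show "\<sigma> \<in> RR n p \<rightarrow> RR n p" using p by (auto simp: \<sigma>_def RR_def)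
    show "\<tau> \<in> RR n p \<rightarrow> RR n p" using p by (auto simp: \<tau>_def RR_def)
    show "\<tau> (\<sigma> x) = x" if "x \<in> RR n p" for x
    proof (rule ext)
      fix j show "\<tau> (\<sigma> x) j = x j"
      proof (cases "j < n")
        case True
        have "x j \<in> {0..<int p}" using that True by (auto simp: RR_def)
        then show ?thesis using True by (simp add: \<sigma>_def \<tau>_def mod_diff_left_eq)
      next
        case False
        have "x j = undefined" using that False unfolding RR_def by (intro PiE_arb) auto
        then show ?thesis using False by (simp add: \<sigma>_def \<tau>_def)
      qed
    qed
    show "\<sigma> (\<tau> x) = x" if "x \<in> RR n p" for x
    proof (rule ext)
      fix j show "\<sigma> (\<tau> x) j = x j"
      proof (cases "j < n")
        case True
        have "x j \<in> {0..<int p}" using that True by (auto simp: RR_def)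
        then show ?thesis using True by (simp add: \<sigma>_def \<tau>_def mod_add_left_eq)
      next
        case False
        have "x j = undefined" using that False unfolding RR_def by (intro PiE_arb) auto
        then show ?thesis using False by (simp add: \<sigma>_def \<tau>_def)
      qed
    qed
  qed
  have gs: "g (\<sigma> x) = ee p (\<Sum>j<n. a j * v j) * g x" for x
  proof -
    have s1: "(\<Sum>j<n. \<sigma> x j * c j) = (\<Sum>j<n. ((x j + v j) mod int p) * c j)"
      by (rule sum.cong) (auto simp: \<sigma>_def)
    have s2: "(\<Sum>j<n. a j * \<sigma> x j) = (\<Sum>j<n. ((x j + v j) mod int p) * a j)"
      by (rule sum.cong) (auto simp: \<sigma>_def)
    have d: "int p dvd (\<Sum>j<n. \<sigma> x j * c j) \<longleftrightarrow> int p dvd (\<Sum>j<n. x j * c j)"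
    proof -
      have "int p dvd (\<Sum>j<n. \<sigma> x j * c j) \<longleftrightarrow> int p dvd ((\<Sum>j<n. x j * c j) + (\<Sum>j<n. v j * c j))"
      proof -
        have "(\<Sum>j<n. \<sigma> x j * c j) mod int p = ((\<Sum>j<n. x j * c j) + (\<Sum>j<n. v j * c j)) mod int p"
          by (simp only: s1 sum_mod_shift)
        then show ?thesis by (simp only: dvd_eq_mod_eq_0)
      qed
      also have "\<dots> \<longleftrightarrow> int p dvd (\<Sum>j<n. x j * c j)" using vc by (simp add: dvd_add_left_iff)
      finally show ?thesis .
    qed
    have e: "ee p (\<Sum>j<n. a j * \<sigma> x j) = ee p (\<Sum>j<n. a j * v j) * ee p (\<Sum>j<n. a j * x j)"
    proof -
      have "ee p (\<Sum>j<n. a j * \<sigma> x j) = ee p ((\<Sum>j<n. a j * \<sigma> x j) mod int p)" using p by (simp add: ee_mod)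
      also have "\<dots> = ee p (((\<Sum>j<n. x j * a j) + (\<Sum>j<n. v j * a j)) mod int p)"
        unfolding s2 sum_mod_shift ..
      also have "\<dots> = ee p ((\<Sum>j<n. x j * a j) + (\<Sum>j<n. v j * a j))" using p by (simp add: ee_mod)
      finally show ?thesis by (simp add: ee_add mult.commute)
    qed
    show ?thesis unfolding g_def d e by simp
  qed
  have "sum g (RR n p) = sum (\<lambda>x. g (\<sigma> x)) (RR n p)"
    using sum.reindex_bij_betw[OF bij, of g] by simp
  also have "\<dots> = ee p (\<Sum>j<n. a j * v j) * sum g (RR n p)"
    by (simp add: gs sum_distrib_left)
  finally have "(1 - ee p (\<Sum>j<n. a j * v j)) * sum g (RR n p) = 0" by (simp add: algebra_simps)
  moreover have "1 - ee p (\<Sum>j<n. a j * v j) \<noteq> 0" using ee_ne1[OF p av] by simp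
  ultimately show ?thesis using T by simp
qed

lemma card_hyper:
  fixes c :: "nat \<Rightarrow> int"
  assumes p: "prime p" and l: "l < n" and cl: "\<not> int p dvd c l"
  shows "card {x\<in>RR n p. int p dvd (\<Sum>j<n. x j * c j)} \<le> p^(n-1)"
proof -
  define H where "H = {x\<in>RR n p. int p dvd (\<Sum>j<n. x j * c j)}"
  have pi: "prime (int p)" using p by simp
  have inj: "inj_on (\<lambda>x. x(l:=undefined)) H"
  proof (rule inj_onI)
    fix x y assume x: "x \<in> H" and y: "y \<in> H" and e: "x(l:=undefined) = y(l:=undefined)"
    have oth: "x j = y j" if "j \<noteq> l" for j using e that by (metis fun_upd_other)
    have "(\<Sum>j<n. x j * c j) - (\<Sum>j<n. y j * c j) = (\<Sum>j<n. (x j - y j) * c j)"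
      by (simp add: sum_subtractf left_diff_distrib)
    also have "\<dots> = (x l - y l) * c l + (\<Sum>j\<in>{..<n}-{l}. (x j - y j) * c j)"
      using l by (simp add: sum.remove)
    also have "(\<Sum>j\<in>{..<n}-{l}. (x j - y j) * c j) = 0"
      by (rule sum.neutral) (auto simp: oth)
    finally have "(\<Sum>j<n. x j * c j) - (\<Sum>j<n. y j * c j) = (x l - y l) * c l" by simp
    moreover have "int p dvd (\<Sum>j<n. x j * c j) - (\<Sum>j<n. y j * c j)"
      using x y unfolding H_def by auto
    ultimately have "int p dvd (x l - y l) * c l" by simp
    then have "int p dvd (x l - y l)" using pi cl by (simp add: prime_dvd_mult_iff)
    then have "x l mod int p = y l mod int p" by (simp add: mod_eq_dvd_iff)
    moreover have "x l \<in> {0..<int p}" "y l \<in> {0..<int p}" using x y l unfolding H_def RR_def by auto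
    ultimately have "x l = y l" by simp
    then show "x = y" using oth by (metis ext)
  qed
  have sub: "(\<lambda>x. x(l:=undefined)) ` H \<subseteq> ({0..<n}-{l}) \<rightarrow>\<^sub>E {0..<int p}"
    unfolding H_def RR_def by (auto simp: PiE_def extensional_def Pi_def)
  have "card H = card ((\<lambda>x. x(l:=undefined)) ` H)" using inj by (simp add: card_image)
  also have "\<dots> \<le> card (({0..<n}-{l}) \<rightarrow>\<^sub>E {0..<int p})"
    by (rule card_mono[OF _ sub]) (simp add: finite_PiE)
  also have "\<dots> = p^(n-1)" using l by (simp add: card_PiE)
  finally show ?thesis unfolding H_def .
qed

lemma T_bound:
  fixes c a :: "nat \<Rightarrow> int" and Y :: "nat \<Rightarrow> nat \<Rightarrow> int"
  assumes p: "prime p" and l: "l < n" and al: "\<not> int p dvd a l"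
    and orth: "\<And>i. i \<in> K \<Longrightarrow> (\<Sum>j<n. Y i j * c j) = 0"
  shows "norm (\<Sum>x\<in>{x\<in>RR n p. int p dvd (\<Sum>j<n. x j * c j)}. ee p (\<Sum>j<n. a j * x j))
     \<le> (if \<forall>i\<in>K. int p dvd (\<Sum>j<n. a j * Y i j) then real p^(n-1) else 0)"
proof -
  have p0: "p > 0" using p prime_gt_0_nat by blast
  let ?T = "\<Sum>x\<in>{x\<in>RR n p. int p dvd (\<Sum>j<n. x j * c j)}. ee p (\<Sum>j<n. a j * x j)"
  show ?thesis
  proof (cases "\<forall>i\<in>K. int p dvd (\<Sum>j<n. a j * Y i j)")
    case False
    then obtain i where i: "i \<in> K" "\<not> int p dvd (\<Sum>j<n. a j * Y i j)" by blast
    have "?T = 0" by (rule shift_zero[OF p0, where v="Y i"]) (use i orth in auto)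
    then show ?thesis using False by simp
  next
    case True
    show ?thesis
    proof (cases "\<forall>j<n. int p dvd c j")
      case True
      define v where "v = (\<lambda>j. if j = l then 1 else 0 :: int)"
      have s1: "(\<Sum>j<n. v j * c j) = c l"
      proof -
        have "(\<Sum>j<n. v j * c j) = (\<Sum>j<n. if j = l then c j else 0)" by (rule sum.cong) (auto simp: v_def)
        then show ?thesis using l by (simp add: sum.delta)
      qed
      have s2: "(\<Sum>j<n. a j * v j) = a l"
      proof -
        have "(\<Sum>j<n. a j * v j) = (\<Sum>j<n. if j = l then a j else 0)" by (rule sum.cong) (auto simp: v_def)
        then show ?thesis using l by (simp add: sum.delta)
      qed
      have "?T = 0" by (rule shift_zero[OF p0, where v=v]) (use s1 s2 True l al in auto)
      then show ?thesis by simp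
    next
      case False
      then obtain j where j: "j < n" "\<not> int p dvd c j" by blast
      have "norm ?T \<le> (\<Sum>x\<in>{x\<in>RR n p. int p dvd (\<Sum>j<n. x j * c j)}. norm (ee p (\<Sum>j<n. a j * x j)))"
        by (rule norm_sum)
      also have "\<dots> = real (card {x\<in>RR n p. int p dvd (\<Sum>j<n. x j * c j)})" by (simp add: ee_norm)
      also have "\<dots> \<le> real (p^(n-1))" using card_hyper[OF p j(1), of c] j(2) by linarith
      finally show ?thesis using \<open>\<forall>i\<in>K. _\<close> by simp
    qed
  qed
qed

definition MM :: "nat \<Rightarrow> (nat \<Rightarrow> nat \<Rightarrow> int) \<Rightarrow> int mat" where
  "MM n X = mat n n (\<lambda>(i,j). X i j)"

definition CC :: "nat \<Rightarrow> nat \<Rightarrow> (nat \<Rightarrow> nat \<Rightarrow> int) \<Rightarrow> nat \<Rightarrow> int" where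
  "CC n k Y j = cofactor (MM n (Y(k:=(\<lambda>_. 0)))) k j"

lemma det_row:
  assumes k: "k < n"
  shows "det (MM n (Y(k:=x))) = (\<Sum>j<n. x j * CC n k Y j)"
proof -
  have "det (MM n (Y(k:=x))) = (\<Sum>j<n. MM n (Y(k:=x)) $$ (k,j) * cofactor (MM n (Y(k:=x))) k j)"
    by (rule laplace_expansion_row[OF _ k]) (simp add: MM_def)
  also have "\<dots> = (\<Sum>j<n. x j * CC n k Y j)"
  proof (rule sum.cong[OF refl])
    fix j assume j: "j \<in> {..<n}"
    have "mat_delete (MM n (Y(k:=x))) k j = mat_delete (MM n (Y(k:=(\<lambda>_. 0)))) k j"
      unfolding mat_delete_def MM_def by (rule eq_matI) auto
    then show "MM n (Y(k:=x)) $$ (k,j) * cofactor (MM n (Y(k:=x))) k j = x j * CC n k Y j"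
      using j k by (simp add: CC_def cofactor_def MM_def)
  qed
  finally show ?thesis .
qed

lemma orth_row:
  assumes k: "k < n" and i: "i < n" "i \<noteq> k"
  shows "(\<Sum>j<n. Y i j * CC n k Y j) = 0"
proof -
  have "(\<Sum>j<n. Y i j * CC n k Y j) = det (MM n (Y(k:=Y i)))" using det_row[OF k] by simp
  also have "\<dots> = 0"
  proof (rule det_identical_rows[of _ n k i])
    show "MM n (Y(k := Y i)) \<in> carrier_mat n n" by (simp add: MM_def)
    show "row (MM n (Y(k := Y i))) k = row (MM n (Y(k := Y i))) i"
      using i k by (intro eq_vecI) (auto simp: MM_def)
  qed (use i k in auto)
  finally show ?thesis .
qed

lemma main_bound:
  fixes a :: "nat \<Rightarrow> nat \<Rightarrow> int"
  assumes p: "prime p"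
    and arange: "\<forall>i<n. \<forall>j<n. a i j \<in> {0..<int p}"
    and anz: "\<exists>i<n. \<exists>j<n. a i j \<noteq> 0"
  shows "norm (S_p n p a) \<le> real p ^ ((n-1)*(n-1) + (n-1))"
proof -
  have p0: "p > 0" using p prime_gt_0_nat by blast
  obtain k l where k: "k < n" and l: "l < n" and akl: "a k l \<noteq> 0" using anz by blast
  have ndvd: "\<not> int p dvd a k l"
  proof
    assume "int p dvd a k l"
    moreover have "0 \<le> a k l" "a k l < int p" using arange k l by auto
    ultimately show False using akl zdvd_imp_le[of "int p" "a k l"] by fastforce
  qed
  define K where "K = {..<n} - {k}"
  define R where "R = RR n p"
  define lin0 where "lin0 X = (\<Sum>i<n. \<Sum>j<n. a i j * X i j)" for X :: "nat \<Rightarrow> nat \<Rightarrow> int"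
  define f where "f X = (if det_zero_mod n p X then ee p (lin0 X) else 0)" for X
  define rest where "rest Y = (\<Sum>i\<in>K. \<Sum>j<n. a i j * Y i j)" for Y :: "nat \<Rightarrow> nat \<Rightarrow> int"
  define T where "T Y = (\<Sum>x\<in>{x\<in>R. int p dvd (\<Sum>j<n. x j * CC n k Y j)}. ee p (\<Sum>j<n. a k j * x j))" for Y
  have finR: "finite R" unfolding R_def by simp
  have finK: "finite K" unfolding K_def by simp
  have kK: "k \<notin> K" unfolding K_def by simp
  have Fp: "Fp_matrices n p = PiE (insert k K) (\<lambda>_. R)"
    unfolding Fp_matrices_def R_def RR_def K_def using k by (simp add: atLeast0LessThan insert_absorb)
  have finFp: "finite (Fp_matrices n p)" unfolding Fp by (simp add: finite_PiE finR finK)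
  have step1: "S_p n p a = (\<Sum>X\<in>Fp_matrices n p. f X)"
  proof -
    have "S_p n p a = (\<Sum>X\<in>{X \<in> Fp_matrices n p. det_zero_mod n p X}. ee p (lin_form n p a X))"
      unfolding S_p_def ee_def ..
    also have "\<dots> = (\<Sum>X\<in>{X \<in> Fp_matrices n p. det_zero_mod n p X}. ee p (lin0 X))"
      unfolding lin_form_def lin0_def using p0 by (simp add: ee_mod)
    also have "\<dots> = (\<Sum>X\<in>Fp_matrices n p. f X)"
      unfolding f_def using finFp by (simp add: sum.inter_filter)
    finally show ?thesis .
  qed
  have step2: "(\<Sum>X\<in>Fp_matrices n p. f X) = (\<Sum>Y\<in>K \<rightarrow>\<^sub>E R. \<Sum>x\<in>R. f (Y(k:=x)))"
  proof -
    have "(\<Sum>X\<in>Fp_matrices n p. f X) = (\<Sum>z\<in>R \<times> (K \<rightarrow>\<^sub>E R). f ((\<lambda>(y, g). g(k := y)) z))"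
      unfolding Fp PiE_insert_eq by (rule sum.reindex[OF inj_combinator[OF kK], unfolded comp_def])
    also have "\<dots> = (\<Sum>x\<in>R. \<Sum>Y\<in>K \<rightarrow>\<^sub>E R. f (Y(k:=x)))"
      by (simp add: sum.cartesian_product case_prod_beta)
    also have "\<dots> = (\<Sum>Y\<in>K \<rightarrow>\<^sub>E R. \<Sum>x\<in>R. f (Y(k:=x)))"
      by (rule sum.swap)
    finally show ?thesis .
  qed
  have step3: "(\<Sum>x\<in>R. f (Y(k:=x))) = ee p (rest Y) * T Y" for Y
  proof -
    have d: "det_zero_mod n p (Y(k:=x)) \<longleftrightarrow> int p dvd (\<Sum>j<n. x j * CC n k Y j)" for x
      unfolding det_zero_mod_def det_row[OF k, symmetric] MM_def ..
    have li: "lin0 (Y(k:=x)) = rest Y + (\<Sum>j<n. a k j * x j)" for x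
    proof -
      have "lin0 (Y(k:=x)) = (\<Sum>j<n. a k j * x j) + (\<Sum>i\<in>K. \<Sum>j<n. a i j * (Y(k:=x)) i j)"
        unfolding lin0_def K_def using k by (subst sum.remove[of _ k]) simp_all
      also have "(\<Sum>i\<in>K. \<Sum>j<n. a i j * (Y(k:=x)) i j) = rest Y"
        unfolding rest_def by (rule sum.cong) (auto simp: K_def)
      finally show ?thesis by (simp only: add.commute)
    qed
    have "(\<Sum>x\<in>R. f (Y(k:=x))) = (\<Sum>x\<in>R. if int p dvd (\<Sum>j<n. x j * CC n k Y j) then ee p (rest Y) * ee p (\<Sum>j<n. a k j * x j) else 0)"
      unfolding f_def d li ee_add ..
    also have "\<dots> = (\<Sum>x\<in>{x\<in>R. int p dvd (\<Sum>j<n. x j * CC n k Y j)}. ee p (rest Y) * ee p (\<Sum>j<n. a k j * x j))"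
      using finR by (simp add: sum.inter_filter)
    also have "\<dots> = ee p (rest Y) * T Y" unfolding T_def by (simp add: sum_distrib_left)
    finally show ?thesis .
  qed
  define B where "B = {Y\<in>K \<rightarrow>\<^sub>E R. \<forall>i\<in>K. int p dvd (\<Sum>j<n. a k j * Y i j)}"
  have step4: "norm (T Y) \<le> (if \<forall>i\<in>K. int p dvd (\<Sum>j<n. a k j * Y i j) then real p^(n-1) else 0)" for Y
    unfolding T_def R_def
    by (rule T_bound[OF p l, where a="a k", OF ndvd]) (rule orth_row[OF k], auto simp: K_def)
  have "norm (S_p n p a) = norm (\<Sum>Y\<in>K \<rightarrow>\<^sub>E R. ee p (rest Y) * T Y)"
    unfolding step1 step2 step3 ..
  also have "\<dots> \<le> (\<Sum>Y\<in>K \<rightarrow>\<^sub>E R. norm (ee p (rest Y) * T Y))" by (rule norm_sum)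
  also have "\<dots> = (\<Sum>Y\<in>K \<rightarrow>\<^sub>E R. norm (T Y))" by (simp add: norm_mult ee_norm)
  also have "\<dots> \<le> (\<Sum>Y\<in>K \<rightarrow>\<^sub>E R. (if \<forall>i\<in>K. int p dvd (\<Sum>j<n. a k j * Y i j) then real p^(n-1) else 0))"
    by (rule sum_mono) (rule step4)
  also have "\<dots> = real (card B) * real p^(n-1)"
    unfolding B_def using finR finK by (simp add: sum.inter_filter[symmetric] finite_PiE)
  also have "\<dots> \<le> real p^((n-1)*(n-1)) * real p^(n-1)"
  proof -
    define H where "H = {x\<in>R. int p dvd (\<Sum>j<n. x j * a k j)}"
    have "B = K \<rightarrow>\<^sub>E H" unfolding B_def H_def by (auto simp: PiE_def Pi_def mult.commute)
    then have "card B = card H ^ card K" using finK by (simp add: card_PiE)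
    moreover have "card H \<le> p^(n-1)" unfolding H_def R_def by (rule card_hyper[OF p l, where c="a k", OF ndvd])
    moreover have "card K = n - 1" unfolding K_def using k by simp
    ultimately have "card B \<le> (p^(n-1))^(n-1)" by (simp add: power_mono)
    then have "real (card B) \<le> real p^((n-1)*(n-1))"
      by (metis of_nat_le_iff of_nat_power power_mult)
    then show ?thesis by (simp add: mult_right_mono)
  qed
  also have "\<dots> = real p ^ ((n-1)*(n-1) + (n-1))" by (simp add: power_add)
  finally show ?thesis .
qed

theorem lemma3p5:
  fixes n :: nat
  assumes "n \<ge> 1"
  shows "\<exists>C::real. \<forall>(p::nat) (a::nat \<Rightarrow> nat \<Rightarrow> int).
           prime p \<longrightarrow>
           (\<forall>i<n. \<forall>j<n. a i j \<in> {0..<int p}) \<longrightarrow>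
           (\<exists>i<n. \<exists>j<n. a i j \<noteq> 0) \<longrightarrow>
           norm (S_p n p a) \<le> C * real p powr (real (n^2) - (real n + 1) / 2)"
proof (intro exI[of _ 1] allI impI)
  fix p :: nat and a :: "nat \<Rightarrow> nat \<Rightarrow> int"
  assume p: "prime p" and ar: "\<forall>i<n. \<forall>j<n. a i j \<in> {0..<int p}" and nz: "\<exists>i<n. \<exists>j<n. a i j \<noteq> 0"
  have p1: "real p \<ge> 1" using p prime_ge_1_nat by simp
  have "norm (S_p n p a) \<le> real p ^ ((n-1)*(n-1) + (n-1))" by (rule main_bound[OF p ar nz])
  also have "\<dots> = real p powr real ((n-1)*(n-1) + (n-1))"
    using p1 by (intro powr_realpow[symmetric]) simp
  also have "\<dots> \<le> real p powr (real (n^2) - (real n + 1) / 2)"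
  proof (rule powr_mono[OF _ p1])
    have eq: "real ((n-1)*(n-1) + (n-1)) = real n * real n - real n"
    proof -
      obtain m where m: "n = Suc m" using assms by (cases n) auto
      show ?thesis unfolding m by (simp add: algebra_simps)
    qed
    have h: "real (n^2) = real n * real n" by (simp add: power2_eq_square)
    have "real n \<ge> 1" using assms by simp
    then show "real ((n-1)*(n-1) + (n-1)) \<le> real (n^2) - (real n + 1) / 2"
      unfolding eq h by (simp add: field_simps)
  qed
  finally show "norm (S_p n p a) \<le> 1 * real p powr (real (n^2) - (real n + 1) / 2)" by simp
qed

end
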